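(* Let $n\ge 1$ be an integer and let $\mathbb{Z}_5^n$ denote the elementary abelian $5$-group of rank $n$. Suppose that $A\subseteq\mathbb{Z}_5^n$ is sum-free. If $|A|>\frac32\cdot5^{n-1}$, then there are a proper subgroup $H<\mathbb{Z}_5^n$ and an element $e\notin H$ such that $A\subseteq(e+H)\cup(-e+H)$.
   Context: A subset $S$ of an abelian group is sum-free if there are no $x,y,z\in S$ (not necessarily distinct) with $x+y=z$; equivalently $S\cap 2S=\emptyset$, where $2S=\{s_1+s_2: s_1,s_2\in S\}$. *)

theory Defs
  imports "HOL-Analysis.Finite_Cartesian_Product" "HOL-Library.Numeral_Type"
begin

(* Z_5^n is modelled as the type  5 ^ 'n  (vectors over Z/5Z indexed by a finite type 'n,
   with n = CARD('n) >= 1). *)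

definition sum_free :: "'a::ab_group_add set \<Rightarrow> bool" where
  "sum_free S \<longleftrightarrow> (\<forall>x\<in>S. \<forall>y\<in>S. \<forall>z\<in>S. x + y \<noteq> z)"

definition add_subgroup :: "'a::ab_group_add set \<Rightarrow> bool" where
  "add_subgroup H \<longleftrightarrow> 0 \<in> H \<and> (\<forall>x\<in>H. \<forall>y\<in>H. x + y \<in> H) \<and> (\<forall>x\<in>H. - x \<in> H)"

end

theory Submission
  imports Defs
begin


lemma H_nonneg:
  fixes c0 t :: real
  assumes f1: "0 \<le> c0" and f2: "c0 \<le> 1/2" and f3: "3/2 \<le> c0 + t" and f4: "t \<le> 2"
    and f5: "7/5*c0 - 19/40*t + 27/70 \<le> 0"
  shows "0 \<le> (2*c0 - t/2)^2 * (3/5*c0 - t/40 + 27/70) + 5/4*(2 - t)^2 * (7/5*c0 - 19/40*t + 27/70)"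
proof -
  define F1 where "F1 = c0"
  define F2 where "F2 = 1/2 - c0"
  define F3 where "F3 = c0 + t - 3/2"
  define F4 where "F4 = 2 - t"
  define F5 where "F5 = 19/40*t - 7/5*c0 - 27/70"
  have p1: "0 \<le> F1" "0 \<le> F2" "0 \<le> F3" "0 \<le> F4" "0 \<le> F5"
    using assms by (simp_all add: F1_def F2_def F3_def F4_def F5_def)
  have eq: "(2*c0 - t/2)^2 * (3/5*c0 - t/40 + 27/70) + 5/4*(2 - t)^2 * (7/5*c0 - 19/40*t + 27/70)
     = (392000/5545233) * (F5 * F5 * F5) + (179375/193877776) * (F4 * F4 * F4 * F4) + (220199/424682) * (F1 * F4 * F4) + (98352810541/1203639032925) * (F3 * F3 * F4) + (204326/7675605) * (F3 * F3) + (450016/545281245) * (F3 * F3 * F4 * F5) + (3101449429339/3370189292190) * (F3 * F4 * F5) + (3150112/8179218675) * (F3 * F3 * F3 * F4) + (45920/327168747) * (F4 * F5 * F5 * F5) + (3916915904/2292645777) * (F4 * F5 * F5) + (4023877/10745847) * (F3 * F5) + (41552/219539) * (F1 * F1 * F4) + (359605180/271716417) * (F3 * F5 * F5) + (64288/109056249) * (F3 * F4 * F5 * F5)"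
    unfolding F1_def F2_def F3_def F4_def F5_def
    by (simp add: field_simps power2_eq_square)
  have "0 \<le> (392000/5545233) * (F5 * F5 * F5) + (179375/193877776) * (F4 * F4 * F4 * F4) + (220199/424682) * (F1 * F4 * F4) + (98352810541/1203639032925) * (F3 * F3 * F4) + (204326/7675605) * (F3 * F3) + (450016/545281245) * (F3 * F3 * F4 * F5) + (3101449429339/3370189292190) * (F3 * F4 * F5) + (3150112/8179218675) * (F3 * F3 * F3 * F4) + (45920/327168747) * (F4 * F5 * F5 * F5) + (3916915904/2292645777) * (F4 * F5 * F5) + (4023877/10745847) * (F3 * F5) + (41552/219539) * (F1 * F1 * F4) + (359605180/271716417) * (F3 * F5 * F5) + (64288/109056249) * (F3 * F4 * F5 * F5)"
    using p1 by (intro add_nonneg_nonneg mult_nonneg_nonneg; simp)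
  then show ?thesis using eq by simp
qed



lemma Grat_nonneg_aux:
  fixes c0 u v :: real
  assumes "0 \<le> c0" "c0 \<le> 1/2" "0 \<le> u" "u \<le> 1" "0 \<le> v" "v \<le> 1" "3/2 < c0 + u + v"
    and H: "\<And>c0 t::real. 0 \<le> c0 \<Longrightarrow> c0 \<le> 1/2 \<Longrightarrow> 3/2 \<le> c0 + t \<Longrightarrow> t \<le> 2 \<Longrightarrow>
       7/5*c0 - 19/40*t + 27/70 \<le> 0 \<Longrightarrow>
       0 \<le> (2*c0 - t/2)^2 * (3/5*c0 - t/40 + 27/70) + 5/4*(2 - t)^2 * (7/5*c0 - 19/40*t + 27/70)"
  shows "0 \<le> (2*c0 - (u+v)/2)^2 * ((2*c0 - (u+v)/2)/4 + 27/70 + (c0+u+v)/10)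
          + 5/4 * (u - v)^2 * (3*(2*c0 - (u+v)/2)/4 + 27/70 - (c0+u+v)/10)"
proof -
  define sig where "sig = 2*c0 - (u+v)/2"
  define a1 where "a1 = sig/4 + 27/70 + (c0+u+v)/10"
  define a2 where "a2 = 3* sig/4 + 27/70 - (c0+u+v)/10"
  have a1: "0 \<le> a1" unfolding a1_def sig_def using assms(1-7) by (simp add: field_simps)
  have main: "0 \<le> sig^2 * a1 + 5/4 * (u - v)^2 * a2"
  proof (cases "0 \<le> a2")
    case True
    have "0 \<le> sig^2 * a1" using a1 by simp
    moreover have "0 \<le> 5/4 * (u - v)^2 * a2" using True by simp
    ultimately show ?thesis by simp
  next
    case False
    have "(u - v)^2 \<le> (2 - (u+v))^2"
    proof -
      have "(2 - (u+v))^2 - (u - v)^2 = 4*((1-u)*(1-v))" by (simp add: power2_eq_square algebra_simps)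
      moreover have "0 \<le> (1-u)*(1-v)" using assms by simp
      ultimately show ?thesis by linarith
    qed
    then have "5/4 * (2 - (u+v))^2 * a2 \<le> 5/4 * (u - v)^2 * a2"
      using False by (intro mult_right_mono_neg) auto
    moreover have "0 \<le> sig^2 * a1 + 5/4 * (2 - (u+v))^2 * a2"
    proof -
      have e1: "sig = 2*c0 - (u+v)/2" by (simp add: sig_def)
      have e2: "a1 = 3/5*c0 - (u+v)/40 + 27/70" by (simp add: a1_def sig_def field_simps)
      have e3: "a2 = 7/5*c0 - 19/40*(u+v) + 27/70" by (simp add: a2_def sig_def field_simps)
      have "0 \<le> (2*c0 - (u+v)/2)^2 * (3/5*c0 - (u+v)/40 + 27/70) + 5/4*(2 - (u+v))^2 * (7/5*c0 - 19/40*(u+v) + 27/70)"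
        using assms False e3 by (intro H) auto
      then show ?thesis using e1 e2 e3 by simp
    qed
    ultimately show ?thesis by linarith
  qed
  then show ?thesis using main unfolding sig_def a1_def a2_def by simp
qed

lemma KI5:
  fixes c0 c1 c2 c3 c4 :: real
  assumes n0: "0 \<le> c0" "0 \<le> c1" "0 \<le> c2" "0 \<le> c3" "0 \<le> c4"
    and b0: "c0 \<le> 1/2" and b14: "c1 + c4 \<le> 1" and b23: "c2 + c3 \<le> 1"
    and S: "3/2 < c0+c1+c2+c3+c4"
    and G: "\<And>c0 u v::real. 0 \<le> c0 \<Longrightarrow> c0 \<le> 1/2 \<Longrightarrow> 0 \<le> u \<Longrightarrow> u \<le> 1 \<Longrightarrow> 0 \<le> v \<Longrightarrow> v \<le> 1 \<Longrightarrow> 3/2 < c0 + u + v \<Longrightarrow>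
      0 \<le> (2*c0 - (u+v)/2)^2 * ((2*c0 - (u+v)/2)/4 + 27/70 + (c0+u+v)/10)
          + 5/4 * (u - v)^2 * (3*(2*c0 - (u+v)/2)/4 + 27/70 - (c0+u+v)/10)"
  shows "0 \<le> (c0*c0*c0 + c0*c1*c1 + c0*c2*c2 + c0*c3*c3 + c0*c4*c4 + c1*c0*c1 + c1*c1*c2 + c1*c2*c3 + c1*c3*c4 + c1*c4*c0 + c2*c0*c2 + c2*c1*c3 + c2*c2*c4 + c2*c3*c0 + c2*c4*c1 + c3*c0*c3 + c3*c1*c4 + c3*c2*c0 + c3*c3*c1 + c3*c4*c2 + c4*c0*c4 + c4*c1*c0 + c4*c2*c1 + c4*c3*c2 + c4*c4*c3)
    - (c0+c1+c2+c3+c4)^3/5 + (c0+c1+c2+c3+c4)/5 * ((c0*c0 + c1*c2 + c2*c4 + c3*c1 + c4*c3) - (c0+c1+c2+c3+c4)^2/5)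
    + 27/35 * ((c0*c0 + c1*c1 + c2*c2 + c3*c3 + c4*c4) - (c0+c1+c2+c3+c4)^2/5)"
proof -
  define r where "r = sqrt 5"
  have r2: "r * r = 5" unfolding r_def by simp
  have r0: "0 \<le> r" unfolding r_def by simp
  have rlt: "r < 3"
  proof -
    show ?thesis unfolding r_def by (rule real_less_lsqrt) auto
  qed
  have rgt: "2 < r"
  proof -
    show ?thesis unfolding r_def by (rule real_less_rsqrt) auto
  qed
  define s where "s = c0+c1+c2+c3+c4"
  define u where "u = c1 + c4"
  define v where "v = c2 + c3"
  define d1 where "d1 = c1 - c4"
  define d2 where "d2 = c2 - c3"
  define x1 where "x1 = c0 + (r - 1)/4 * u - (r + 1)/4 * v"
  define x2 where "x2 = c0 - (r + 1)/4 * u + (r - 1)/4 * v"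
  define Y1 where "Y1 = (5 + r)/8 * d1*d1 + r/2 * d1*d2 + (5 - r)/8 * d2*d2"
  define Y2 where "Y2 = (5 - r)/8 * d1*d1 - r/2 * d1*d2 + (5 + r)/8 * d2*d2"
  define sig where "sig = 2*c0 - (u+v)/2"
  define a1 where "a1 = sig/4 + 27/70 + s/10"
  define a2 where "a2 = 3* sig/4 + 27/70 - s/10"
  define K where "K = (1/40)*c4^3 + (3/40)*c3*c4^2 + (-1/8)*c3^2*c4 + (1/40)*c3^3 + (-1/8)*c2*c4^2 + (1/20)*c2*c3*c4 + (-1/40)*c2*c3^2 + (3/40)*c2^2*c4 + (-1/40)*c2^2*c3 + (1/40)*c2^3 + (-1/40)*c1*c4^2 + (1/20)*c1*c3*c4 + (3/40)*c1*c3^2 + (1/20)*c1*c2*c4 + (1/20)*c1*c2*c3 + (-1/8)*c1*c2^2 + (-1/40)*c1^2*c4 + (-1/8)*c1^2*c3 + (3/40)*c1^2*c2 + (1/40)*c1^3"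
  have ident: "(c0*c0*c0 + c0*c1*c1 + c0*c2*c2 + c0*c3*c3 + c0*c4*c4 + c1*c0*c1 + c1*c1*c2 + c1*c2*c3 + c1*c3*c4 + c1*c4*c0 + c2*c0*c2 + c2*c1*c3 + c2*c2*c4 + c2*c3*c0 + c2*c4*c1 + c3*c0*c3 + c3*c1*c4 + c3*c2*c0 + c3*c3*c1 + c3*c4*c2 + c4*c0*c4 + c4*c1*c0 + c4*c2*c1 + c4*c3*c2 + c4*c4*c3)
    - s^3/5 + s/5 * ((c0*c0 + c1*c2 + c2*c4 + c3*c1 + c4*c3) - s^2/5)
    + 27/35 * ((c0*c0 + c1*c1 + c2*c2 + c3*c3 + c4*c4) - s^2/5)
    = 2/5 * ((x1 + 27/35) * Y1 + (x2 + 27/35) * Y2 + (sig^2 * a1 + 5/4 * (u - v)^2 * a2)) - K * (r*r - 5)"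
    unfolding s_def u_def v_def d1_def d2_def x1_def x2_def Y1_def Y2_def sig_def a1_def a2_def K_def
    by (simp add: field_simps power2_eq_square power3_eq_cube)
  have Y1: "0 \<le> Y1"
  proof -
    have "(5+r)/8 * Y1 = ((5+r)/8*d1 + r/4*d2)^2 - 5/64*(r*r - 5)*d2^2"
      unfolding Y1_def by (simp add: field_simps power2_eq_square)
    then have "(5+r)/8 * Y1 = ((5+r)/8*d1 + r/4*d2)^2" using r2 by simp
    then have "0 \<le> (5+r)/8 * Y1" by simp
    moreover have "0 < (5+r)/8" using r0 by simp
    ultimately show ?thesis by (simp add: zero_le_mult_iff)
  qed
  have Y2: "0 \<le> Y2"
  proof -
    have "(5-r)/8 * Y2 = ((5-r)/8*d1 - r/4*d2)^2 - 5/64*(r*r - 5)*d2^2"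
      unfolding Y2_def by (simp add: field_simps power2_eq_square)
    then have "(5-r)/8 * Y2 = ((5-r)/8*d1 - r/4*d2)^2" using r2 by simp
    then have "0 \<le> (5-r)/8 * Y2" by simp
    moreover have "0 < (5-r)/8" using rlt by simp
    ultimately show ?thesis by (simp add: zero_le_mult_iff)
  qed
  have X1: "0 \<le> x1 + 27/35"
  proof -
    have h1: "(r-1)*(3/2 - c0 - v) \<le> (r-1)*u"
      using S rgt unfolding u_def v_def by (intro mult_left_mono) auto
    have q1: "(r-1)*(3/2 - c0 - v) = 3/2*r - r*c0 - r* v - 3/2 + c0 + v" by (simp add: field_simps)
    have q2: "(r-1)*u = r*u - u" by (simp add: field_simps)
    have h1': "3/2*r - r*c0 - r* v - 3/2 + c0 + v \<le> r*u - u" using h1 q1 q2 by linarith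
    have h2: "r* v \<le> r" using mult_left_mono[of v 1 r] b23 n0 r0 unfolding v_def by simp
    have h3: "r*c0 \<le> 5*c0" using mult_right_mono[of r 5 c0] rlt n0 by simp
    have e: "x1 = c0 + (r*u - u)/4 - (r* v + v)/4" unfolding x1_def by (simp add: field_simps)
    show ?thesis using e h1' h2 h3 rlt by argo
  qed
  have X2: "0 \<le> x2 + 27/35"
  proof -
    have h1: "(r-1)*(3/2 - c0 - u) \<le> (r-1)* v"
      using S rgt unfolding u_def v_def by (intro mult_left_mono) auto
    have q1: "(r-1)*(3/2 - c0 - u) = 3/2*r - r*c0 - r*u - 3/2 + c0 + u" by (simp add: field_simps)
    have q2: "(r-1)* v = r* v - v" by (simp add: field_simps)
    have h1': "3/2*r - r*c0 - r*u - 3/2 + c0 + u \<le> r* v - v" using h1 q1 q2 by linarith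
    have h2: "r*u \<le> r" using mult_left_mono[of u 1 r] b14 n0 r0 unfolding u_def by simp
    have h3: "r*c0 \<le> 5*c0" using mult_right_mono[of r 5 c0] rlt n0 by simp
    have e: "x2 = c0 + (r* v - v)/4 - (r*u + u)/4" unfolding x2_def by (simp add: field_simps)
    show ?thesis using e h1' h2 h3 rlt by argo
  qed
  have GR: "0 \<le> sig^2 * a1 + 5/4 * (u - v)^2 * a2"
    unfolding sig_def a1_def a2_def s_def
    using G[of c0 u v] n0 b0 b14 b23 S unfolding u_def v_def by (simp add: algebra_simps)
  have fin: "0 \<le> 2/5 * ((x1 + 27/35) * Y1 + (x2 + 27/35) * Y2 + (sig^2 * a1 + 5/4 * (u - v)^2 * a2))"
  proof -
    have t1: "0 \<le> (x1 + 27/35) * Y1" using X1 Y1 by (rule mult_nonneg_nonneg)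
    have t2: "0 \<le> (x2 + 27/35) * Y2" using X2 Y2 by (rule mult_nonneg_nonneg)
    have "0 \<le> (x1 + 27/35) * Y1 + (x2 + 27/35) * Y2 + (sig^2 * a1 + 5/4 * (u - v)^2 * a2)"
      using t1 t2 GR by argo
    then show ?thesis by (rule mult_nonneg_nonneg[rotated]) simp
  qed
  have e2: "K * (r*r - 5) = 0" using r2 by simp
  note eq = ident[unfolded e2 diff_zero]
  show ?thesis unfolding s_def[symmetric] eq by (rule fin)
qed


lemma UNIV_5: "(UNIV :: 5 set) = {0,1,2,3,4}"
proof -
  have "x \<in> {0,1,2,3,4}" for x :: 5
  proof (cases x)
    case (of_int z)
    then have "z \<in> {0,1,2,3,4}" by auto
    then show ?thesis using of_int by auto
  qed
  then show ?thesis by auto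
qed

lemma z5_inv: "(d::5) \<noteq> 0 \<Longrightarrow> \<exists>e. d * e = 1"
proof -
  assume "d \<noteq> 0"
  then have "d = 1 \<or> d = 2 \<or> d = 3 \<or> d = 4" using UNIV_5 by auto
  then show ?thesis
  proof (elim disjE)
    assume "d = 1" then show ?thesis by (intro exI[of _ 1]) simp
  next
    assume "d = 2" then show ?thesis by (intro exI[of _ 3]) simp
  next
    assume "d = 3" then show ?thesis by (intro exI[of _ 2]) simp
  next
    assume "d = 4" then show ?thesis by (intro exI[of _ 4]) simp
  qed
qed

lemma z5_of_nat: "\<exists>m. (z::5) = of_nat m"
proof -
  have "z = 0 \<or> z = 1 \<or> z = 2 \<or> z = 3 \<or> z = 4" using UNIV_5 by auto
  then show ?thesis
  proof (elim disjE)
    assume "z = 0" then show ?thesis by (intro exI[of _ 0]) simp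
  next
    assume "z = 1" then show ?thesis by (intro exI[of _ 1]) simp
  next
    assume "z = 2" then show ?thesis by (intro exI[of _ 2]) simp
  next
    assume "z = 3" then show ?thesis by (intro exI[of _ 3]) simp
  next
    assume "z = 4" then show ?thesis by (intro exI[of _ 4]) simp
  qed
qed

definition dotp :: "5^'n \<Rightarrow> 5^'n \<Rightarrow> 5" where
  "dotp u v = (\<Sum>i\<in>UNIV. u$i * v$i)"

lemma dotp_add_right: "dotp u (v + w) = dotp u v + dotp u w"
  by (simp add: dotp_def distrib_left sum.distrib)
lemma dotp_add_left: "dotp (u + v) w = dotp u w + dotp v w"
  by (simp add: dotp_def distrib_right sum.distrib)
lemma dotp_uminus_right: "dotp u (- v) = - dotp u v"
  by (simp add: dotp_def sum_negf)
lemma dotp_diff_right: "dotp u (v - w) = dotp u v - dotp u w"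
  by (simp add: dotp_def right_diff_distrib sum_subtractf)
lemma dotp_diff_left: "dotp (u - v) w = dotp u w - dotp v w"
  by (simp add: dotp_def left_diff_distrib sum_subtractf)
lemma dotp_zero_right [simp]: "dotp u 0 = 0"
  by (simp add: dotp_def)
lemma dotp_zero_left [simp]: "dotp 0 v = 0"
  by (simp add: dotp_def)
lemma dotp_commute: "dotp u v = dotp v u"
  by (simp add: dotp_def mult.commute)
lemma dotp_axis: "dotp (axis k 1) w = w $ k"
proof -
  have "(\<Sum>i\<in>UNIV. axis k 1 $ i * w $ i) = (\<Sum>i\<in>UNIV. if i = k then w$k else 0)"
    by (rule sum.cong) (auto simp: axis_def)
  then show ?thesis by (simp add: dotp_def)
qed

lemma card_level:
  fixes w :: "5^'n"
  assumes "w \<noteq> 0"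
  shows "card {u::5^'n. dotp u w = j} = 5 ^ (CARD('n) - 1)"
proof -
  obtain k where wk: "w$k \<noteq> 0" using assms by (auto simp: vec_eq_iff)
  define e :: "5^'n" where "e = axis k 1"
  have de: "dotp e w = w$k" unfolding e_def by (rule dotp_axis)
  define L where "L = (\<lambda>j. {u::5^'n. dotp u w = j})"
  have step: "card (L j) = card (L (j + w$k))" for j
  proof -
    have "(\<lambda>u. u + e) ` L j = L (j + w$k)"
    proof
      show "(\<lambda>u. u + e) ` L j \<subseteq> L (j + w$k)"
        by (auto simp: L_def dotp_add_left de)
      show "L (j + w$k) \<subseteq> (\<lambda>u. u + e) ` L j"
      proof
        fix v assume "v \<in> L (j + w$k)"
        then have "v - e \<in> L j" by (simp add: L_def dotp_diff_left de)
        moreover have "v = (v - e) + e" by simp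
        ultimately show "v \<in> (\<lambda>u. u + e) ` L j" by blast
      qed
    qed
    moreover have "inj_on (\<lambda>u. u + e) (L j)" by (auto simp: inj_on_def)
    ultimately show ?thesis by (metis card_image)
  qed
  have iter: "card (L j) = card (L (j + of_nat m * w$k))" for j m
  proof (induction m)
    case 0 then show ?case by simp
  next
    case (Suc m)
    have "j + of_nat (Suc m) * w$k = (j + of_nat m * w$k) + w$k" by (simp add: algebra_simps)
    then show ?case using Suc step by metis
  qed
  have alleq: "card (L j) = card (L j')" for j j'
  proof -
    obtain d where d: "w$k * d = 1" using z5_inv[OF wk] by blast
    obtain m where m: "(j' - j) * d = of_nat m" using z5_of_nat by blast
    have "j + of_nat m * w$k = j'"
    proof -
      have "of_nat m * w$k = ((j' - j) * d) * w$k" by (simp add: m)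
      also have "\<dots> = (j' - j) * (w$k * d)" by (simp add: ac_simps)
      finally have "j + of_nat m * w$k = j + (j' - j) * (w$k * d)" by simp
      also have "\<dots> = j'" using d by simp
      finally show ?thesis .
    qed
    then show ?thesis using iter[of j m] by simp
  qed
  have total: "(\<Sum>j\<in>UNIV. card (L j)) = CARD(5^'n)"
  proof -
    have "(\<Sum>j\<in>UNIV. \<Sum>x\<in>{x. x \<in> (UNIV::(5^'n) set) \<and> dotp x w = j}. (1::nat)) = (\<Sum>x\<in>(UNIV::(5^'n) set). 1)"
      using sum.group[of "UNIV::(5^'n) set" "UNIV::5 set" "\<lambda>x. dotp x w" "\<lambda>_. (1::nat)"] by simp
    then show ?thesis by (simp add: L_def)
  qed
  have "(\<Sum>j\<in>(UNIV::5 set). card (L j)) = (\<Sum>j\<in>(UNIV::5 set). card (L 0))"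
    by (intro sum.cong refl) (rule alleq)
  then have "(\<Sum>j\<in>(UNIV::5 set). card (L j)) = 5 * card (L 0)" by simp
  then have "5 * card (L 0) = 5 ^ CARD('n)" using total by simp
  moreover have "CARD('n) \<noteq> 0" by simp
  ultimately have "card (L 0) = 5 ^ (CARD('n) - 1)"
    by (metis (no_types, lifting) Suc_pred' bot_nat_0.not_eq_extremum mult_cancel_left power_Suc zero_neq_numeral)
  then show ?thesis using alleq[of j 0] by (simp add: L_def)
qed



lemma five_simps: "(5::5) = 0" "(6::5) = 1" "(7::5) = 2" "(8::5) = 3"
  by simp_all

lemma KIsum:
  fixes a :: "5 \<Rightarrow> real" and N :: real
  assumes an: "\<And>j. 0 \<le> a j" and Np: "0 < N" and h0: "2 * a 0 \<le> N" and h14: "a 1 + a 4 \<le> N"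
    and h23: "a 2 + a 3 \<le> N"
    and hs: "3 * N < 2 * (\<Sum>j\<in>UNIV. a j)"
  shows "0 \<le> (\<Sum>i\<in>UNIV. \<Sum>j\<in>UNIV. a i * a j * a (i + j)) - (\<Sum>j\<in>UNIV. a j)^3/5
     + 1/5 * (\<Sum>j\<in>UNIV. a j) * ((\<Sum>j\<in>UNIV. a j * a (j + j)) - (\<Sum>j\<in>UNIV. a j)^2/5)
     + 27/35 * N * ((\<Sum>j\<in>UNIV. a j * a j) - (\<Sum>j\<in>UNIV. a j)^2/5)"
proof -
  define c where "c j = a j / N" for j
  have ac: "a j = N * c j" for j using Np by (simp add: c_def)
  define Tc where "Tc = (\<Sum>i\<in>UNIV. \<Sum>j\<in>UNIV. c i * c j * c (i + j))"
  define Sc where "Sc = (\<Sum>j\<in>UNIV. c j)"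
  define Bc where "Bc = (\<Sum>j\<in>UNIV. c j * c (j + j))"
  define Pc where "Pc = (\<Sum>j\<in>UNIV. c j * c j)"
  have eTa: "(\<Sum>i\<in>UNIV. \<Sum>j\<in>UNIV. a i * a j * a (i + j)) = N^3 * Tc"
    unfolding ac Tc_def by (simp add: sum_distrib_left power3_eq_cube mult_ac)
  have eSa: "(\<Sum>j\<in>UNIV. a j) = N * Sc"
    unfolding ac Sc_def by (simp add: sum_distrib_left)
  have eBa: "(\<Sum>j\<in>UNIV. a j * a (j + j)) = N^2 * Bc"
    unfolding ac Bc_def by (simp add: sum_distrib_left power2_eq_square mult_ac)
  have ePa: "(\<Sum>j\<in>UNIV. a j * a j) = N^2 * Pc"
    unfolding ac Pc_def by (simp add: sum_distrib_left power2_eq_square mult_ac)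
  have cn: "0 \<le> c 0" "0 \<le> c 1" "0 \<le> c 2" "0 \<le> c 3" "0 \<le> c 4"
    using an Np by (simp_all add: c_def)
  have sumc: "Sc = c 0 + c 1 + c 2 + c 3 + c 4"
    unfolding Sc_def UNIV_5 by (simp add: add.assoc)
  have cb0: "c 0 \<le> 1/2" using h0 Np by (simp add: c_def field_simps)
  have cb14: "c 1 + c 4 \<le> 1" using h14 Np by (simp add: c_def field_simps)
  have cb23: "c 2 + c 3 \<le> 1" using h23 Np by (simp add: c_def field_simps)
  have cS: "3/2 < c 0 + c 1 + c 2 + c 3 + c 4"
  proof -
    have "3 * N < 2 * (N * Sc)" using hs eSa by simp
    then have "3 / 2 < Sc" using Np by (simp add: field_simps)
    then show ?thesis using sumc by simp
  qed
  have K: "0 \<le> (c 0*c 0*c 0 + c 0*c 1*c 1 + c 0*c 2*c 2 + c 0*c 3*c 3 + c 0*c 4*c 4 + c 1*c 0*c 1 + c 1*c 1*c 2 + c 1*c 2*c 3 + c 1*c 3*c 4 + c 1*c 4*c 0 + c 2*c 0*c 2 + c 2*c 1*c 3 + c 2*c 2*c 4 + c 2*c 3*c 0 + c 2*c 4*c 1 + c 3*c 0*c 3 + c 3*c 1*c 4 + c 3*c 2*c 0 + c 3*c 3*c 1 + c 3*c 4*c 2 + c 4*c 0*c 4 + c 4*c 1*c 0 + c 4*c 2*c 1 + c 4*c 3*c 2 + c 4*c 4*c 3)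
    - (c 0+c 1+c 2+c 3+c 4)^3/5 + (c 0+c 1+c 2+c 3+c 4)/5 * ((c 0*c 0 + c 1*c 2 + c 2*c 4 + c 3*c 1 + c 4*c 3) - (c 0+c 1+c 2+c 3+c 4)^2/5)
    + 27/35 * ((c 0*c 0 + c 1*c 1 + c 2*c 2 + c 3*c 3 + c 4*c 4) - (c 0+c 1+c 2+c 3+c 4)^2/5)"
    by (rule KI5[OF cn cb0 cb14 cb23 cS Grat_nonneg_aux[OF _ _ _ _ _ _ _ H_nonneg]])
  have eT: "Tc = c 0*c 0*c 0 + c 0*c 1*c 1 + c 0*c 2*c 2 + c 0*c 3*c 3 + c 0*c 4*c 4 + c 1*c 0*c 1 + c 1*c 1*c 2 + c 1*c 2*c 3 + c 1*c 3*c 4 + c 1*c 4*c 0 + c 2*c 0*c 2 + c 2*c 1*c 3 + c 2*c 2*c 4 + c 2*c 3*c 0 + c 2*c 4*c 1 + c 3*c 0*c 3 + c 3*c 1*c 4 + c 3*c 2*c 0 + c 3*c 3*c 1 + c 3*c 4*c 2 + c 4*c 0*c 4 + c 4*c 1*c 0 + c 4*c 2*c 1 + c 4*c 3*c 2 + c 4*c 4*c 3" unfolding Tc_def UNIV_5 by (simp add: five_simps add.assoc)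
  have eB: "Bc = c 0*c 0 + c 1*c 2 + c 2*c 4 + c 3*c 1 + c 4*c 3" unfolding Bc_def UNIV_5 by (simp add: five_simps add.assoc)
  have eP: "Pc = c 0*c 0 + c 1*c 1 + c 2*c 2 + c 3*c 3 + c 4*c 4" unfolding Pc_def UNIV_5 by (simp add: five_simps add.assoc)
  have Kc: "0 \<le> Tc - Sc^3/5 + Sc/5 * (Bc - Sc^2/5) + 27/35 * (Pc - Sc^2/5)"
    using K unfolding eT eB eP sumc .
  have "(\<Sum>i\<in>UNIV. \<Sum>j\<in>UNIV. a i * a j * a (i + j)) - (\<Sum>j\<in>UNIV. a j)^3/5
     + 1/5 * (\<Sum>j\<in>UNIV. a j) * ((\<Sum>j\<in>UNIV. a j * a (j + j)) - (\<Sum>j\<in>UNIV. a j)^2/5)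
     + 27/35 * N * ((\<Sum>j\<in>UNIV. a j * a j) - (\<Sum>j\<in>UNIV. a j)^2/5)
     = N^3 * (Tc - Sc^3/5 + Sc/5 * (Bc - Sc^2/5) + 27/35 * (Pc - Sc^2/5))"
    unfolding eTa eSa eBa ePa by (simp add: field_simps power2_eq_square power3_eq_cube)
  moreover have "0 \<le> N^3 * (Tc - Sc^3/5 + Sc/5 * (Bc - Sc^2/5) + 27/35 * (Pc - Sc^2/5))"
    using Kc Np by simp
  ultimately show ?thesis by simp
qed



definition acnt :: "(5^'n) set \<Rightarrow> 5^'n \<Rightarrow> 5 \<Rightarrow> real" where
  "acnt A u j = real (card {x \<in> A. dotp u x = j})"

lemma acnt_ind: "acnt A u j = (\<Sum>z\<in>A. if dotp u z = j then 1 else 0)"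
proof -
  have "real (card {x \<in> A. dotp u x = j}) = (\<Sum>z\<in>{x \<in> A. dotp u x = j}. 1)" by simp
  also have "\<dots> = (\<Sum>z\<in>A. if dotp u z = j then 1 else 0)"
    by (rule sum.inter_filter) simp
  finally show ?thesis by (simp add: acnt_def)
qed

lemma fib:
  fixes g :: "5 \<Rightarrow> real"
  shows "(\<Sum>x\<in>A. g (dotp u x)) = (\<Sum>j\<in>UNIV. acnt A u j * g j)"
proof -
  have "(\<Sum>x\<in>A. g (dotp u x)) = (\<Sum>j\<in>UNIV. \<Sum>x\<in>{x. x \<in> A \<and> dotp u x = j}. g (dotp u x))"
    using sum.group[of A "UNIV::5 set" "\<lambda>x. dotp u x" "\<lambda>x. g (dotp u x)"] by simp
  also have "\<dots> = (\<Sum>j\<in>UNIV. \<Sum>x\<in>{x. x \<in> A \<and> dotp u x = j}. g j)"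
    by (intro sum.cong refl) auto
  also have "\<dots> = (\<Sum>j\<in>UNIV. acnt A u j * g j)"
    by (simp add: acnt_def)
  finally show ?thesis .
qed

lemma card_level':
  fixes u :: "5^'n"
  assumes "u \<noteq> 0"
  shows "card {v::5^'n. dotp u v = j} = 5 ^ (CARD('n) - 1)"
proof -
  have "{v::5^'n. dotp u v = j} = {v. dotp v u = j}" by (simp add: dotp_commute)
  then show ?thesis using card_level[OF assms] by simp
qed

lemma card_UNIV_vec5: "real (CARD(5^'n)) = 5 * 5 ^ (CARD('n) - 1)"
proof -
  have "CARD('n) \<noteq> 0" by simp
  then have "(5::nat) ^ CARD('n) = 5 * 5 ^ (CARD('n) - 1)"
    by (metis Suc_pred' bot_nat_0.not_eq_extremum power_Suc)
  then show ?thesis by simp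
qed

lemma count_zero:
  fixes w :: "5^'n"
  shows "(\<Sum>u\<in>UNIV. if dotp u w = 0 then 1 else 0::real) =
     (if w = 0 then 5 * 5 ^ (CARD('n) - 1) else 5 ^ (CARD('n) - 1))"
proof -
  have "(\<Sum>u\<in>UNIV. if dotp u w = 0 then 1 else 0::real) = real (card {u. dotp u w = 0})"
    using sum.inter_filter[of "UNIV::(5^'n) set" "\<lambda>_. (1::real)" "\<lambda>u. dotp u w = 0"] by simp
  also have "\<dots> = (if w = 0 then 5 * 5 ^ (CARD('n) - 1) else 5 ^ (CARD('n) - 1))"
  proof (cases "w = 0")
    case True
    then show ?thesis using card_UNIV_vec5 by simp
  next
    case False
    then show ?thesis using card_level[OF False, of 0] by simp
  qed
  finally show ?thesis .
qed


lemma cond_T: "(dotp u z = dotp u x + dotp u y) = (dotp u (x + y - z) = 0)"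
proof -
  have "dotp u (x + y - z) = (dotp u x + dotp u y) - dotp u z" by (simp add: dotp_add_right dotp_diff_right)
  then show ?thesis by (auto simp: right_minus_eq)
qed

lemma cond_P: "(dotp u z = dotp u x) = (dotp u (x - z) = 0)"
  by (auto simp: dotp_diff_right right_minus_eq)

lemma swap4:
  fixes f :: "'a \<Rightarrow> 'b \<Rightarrow> 'b \<Rightarrow> 'b \<Rightarrow> real"
  shows "(\<Sum>u\<in>U. \<Sum>x\<in>A. \<Sum>y\<in>A. \<Sum>z\<in>A. f u x y z) = (\<Sum>x\<in>A. \<Sum>y\<in>A. \<Sum>z\<in>A. \<Sum>u\<in>U. f u x y z)"
proof -
  have "(\<Sum>u\<in>U. \<Sum>x\<in>A. \<Sum>y\<in>A. \<Sum>z\<in>A. f u x y z) = (\<Sum>x\<in>A. \<Sum>u\<in>U. \<Sum>y\<in>A. \<Sum>z\<in>A. f u x y z)"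
    by (rule sum.swap)
  also have "\<dots> = (\<Sum>x\<in>A. \<Sum>y\<in>A. \<Sum>u\<in>U. \<Sum>z\<in>A. f u x y z)"
    by (intro sum.cong refl) (rule sum.swap)
  also have "\<dots> = (\<Sum>x\<in>A. \<Sum>y\<in>A. \<Sum>z\<in>A. \<Sum>u\<in>U. f u x y z)"
    by (intro sum.cong refl) (rule sum.swap)
  finally show ?thesis .
qed

lemma swap3:
  fixes f :: "'a \<Rightarrow> 'b \<Rightarrow> 'b \<Rightarrow> real"
  shows "(\<Sum>u\<in>U. \<Sum>x\<in>A. \<Sum>z\<in>A. f u x z) = (\<Sum>x\<in>A. \<Sum>z\<in>A. \<Sum>u\<in>U. f u x z)"
proof -
  have "(\<Sum>u\<in>U. \<Sum>x\<in>A. \<Sum>z\<in>A. f u x z) = (\<Sum>x\<in>A. \<Sum>u\<in>U. \<Sum>z\<in>A. f u x z)"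
    by (rule sum.swap)
  also have "\<dots> = (\<Sum>x\<in>A. \<Sum>z\<in>A. \<Sum>u\<in>U. f u x z)"
    by (intro sum.cong refl) (rule sum.swap)
  finally show ?thesis .
qed

theorem theorem3:
  fixes A :: "(5 ^ 'n) set"
  assumes "sum_free A"
    and "real (card A) > 3 / 2 * 5 ^ (CARD('n) - 1)"
  shows "\<exists>H e. add_subgroup H \<and> H \<noteq> UNIV \<and> e \<notin> H \<and>
           A \<subseteq> (\<lambda>h. e + h) ` H \<union> (\<lambda>h. - e + h) ` H"
proof -
  define N :: real where "N = 5 ^ (CARD('n) - 1)"
  define m :: real where "m = real (card A)"
  have Npos: "0 < N" by (simp add: N_def)
  have big: "3 * N < 2 * m" using assms(2) by (simp add: N_def m_def)
  have mpos: "0 < m" using big Npos by linarith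
  have sf: "\<And>x y z. x \<in> A \<Longrightarrow> y \<in> A \<Longrightarrow> z \<in> A \<Longrightarrow> x + y \<noteq> z"
    using assms(1) by (simp add: sum_free_def)
  have finA: "finite A" by simp
  define Tu where "Tu u = (\<Sum>x\<in>A. \<Sum>y\<in>A. acnt A u (dotp u x + dotp u y))" for u
  define Bu where "Bu u = (\<Sum>x\<in>A. acnt A u (dotp u x + dotp u x))" for u
  define Pu where "Pu u = (\<Sum>x\<in>A. acnt A u (dotp u x))" for u
  define Psi where "Psi u = Tu u - m^3/5 + 1/5*m*(Bu u - m^2/5) + 27/35*N*(Pu u - m^2/5)" for u
  have cU: "real (CARD(5^'n)) = 5 * N" using card_UNIV_vec5 by (simp add: N_def)
  have cU2: "(5::real) ^ CARD('n) = 5 * N" using cU by simp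
  have ST: "(\<Sum>u\<in>UNIV. Tu u) = m^3 * N"
  proof -
    have "(\<Sum>u\<in>UNIV. Tu u) = (\<Sum>u\<in>UNIV. \<Sum>x\<in>A. \<Sum>y\<in>A. \<Sum>z\<in>A.
            (if dotp u (x + y - z) = 0 then 1 else 0::real))"
      unfolding Tu_def acnt_ind cond_T ..
    also have "\<dots> = (\<Sum>x\<in>A. \<Sum>y\<in>A. \<Sum>z\<in>A. \<Sum>u\<in>UNIV.
            (if dotp u (x + y - z) = 0 then 1 else 0::real))"
      by (rule swap4)
    also have "\<dots> = (\<Sum>x\<in>A. \<Sum>y\<in>A. \<Sum>z\<in>A. N)"
    proof (intro sum.cong refl)
      fix x y z assume "x \<in> A" "y \<in> A" "z \<in> A"
      then have "x + y - z \<noteq> 0" using sf by (simp add: right_minus_eq)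
      then show "(\<Sum>u\<in>UNIV. if dotp u (x + y - z) = 0 then 1 else 0::real) = N"
        by (simp add: count_zero N_def)
    qed
    also have "\<dots> = m^3 * N" by (simp add: m_def power3_eq_cube)
    finally show ?thesis .
  qed
  have SB: "(\<Sum>u\<in>UNIV. Bu u) = m^2 * N"
  proof -
    have "(\<Sum>u\<in>UNIV. Bu u) = (\<Sum>u\<in>UNIV. \<Sum>x\<in>A. \<Sum>z\<in>A.
            (if dotp u (x + x - z) = 0 then 1 else 0::real))"
      unfolding Bu_def acnt_ind cond_T ..
    also have "\<dots> = (\<Sum>x\<in>A. \<Sum>z\<in>A. \<Sum>u\<in>UNIV.
            (if dotp u (x + x - z) = 0 then 1 else 0::real))"
      by (rule swap3)
    also have "\<dots> = (\<Sum>x\<in>A. \<Sum>z\<in>A. N)"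
    proof (intro sum.cong refl)
      fix x z assume "x \<in> A" "z \<in> A"
      then have "x + x - z \<noteq> 0" using sf[of x x z] right_minus_eq by metis
      then show "(\<Sum>u\<in>UNIV. if dotp u (x + x - z) = 0 then 1 else 0::real) = N"
        by (simp add: count_zero N_def)
    qed
    also have "\<dots> = m^2 * N" by (simp add: m_def power2_eq_square)
    finally show ?thesis .
  qed
  have SP: "(\<Sum>u\<in>UNIV. Pu u) = m^2 * N + 4 * m * N"
  proof -
    have "(\<Sum>u\<in>UNIV. Pu u) = (\<Sum>u\<in>UNIV. \<Sum>x\<in>A. \<Sum>z\<in>A.
            (if dotp u (x - z) = 0 then 1 else 0::real))"
      unfolding Pu_def acnt_ind cond_P ..
    also have "\<dots> = (\<Sum>x\<in>A. \<Sum>z\<in>A. \<Sum>u\<in>UNIV.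
            (if dotp u (x - z) = 0 then 1 else 0::real))"
      by (rule swap3)
    also have "\<dots> = (\<Sum>x\<in>A. \<Sum>z\<in>A. N + (if x = z then 4 * N else 0))"
    proof (intro sum.cong refl)
      fix x z assume "x \<in> A" "z \<in> A"
      show "(\<Sum>u\<in>UNIV. if dotp u (x - z) = 0 then 1 else 0::real) = N + (if x = z then 4 * N else 0)"
        by (simp add: count_zero N_def right_minus_eq)
    qed
    also have "\<dots> = (\<Sum>x\<in>A. m * N + 4 * N)"
    proof (intro sum.cong refl)
      fix x assume "x \<in> A"
      then show "(\<Sum>z\<in>A. N + (if x = z then 4 * N else 0)) = m * N + 4 * N"
        by (simp add: sum.distrib m_def)
    qed
    also have "\<dots> = m^2 * N + 4 * m * N" by (simp add: m_def power2_eq_square algebra_simps)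
    finally show ?thesis .
  qed
  have msum: "(\<Sum>j\<in>UNIV. acnt A u j) = m" for u
    using fib[where g="\<lambda>_. 1" and A=A and u=u] by (simp add: m_def)
  have Tform: "Tu u = (\<Sum>i\<in>UNIV. \<Sum>j\<in>UNIV. acnt A u i * acnt A u j * acnt A u (i + j))" for u
  proof -
    have "Tu u = (\<Sum>x\<in>A. \<Sum>j\<in>UNIV. acnt A u j * acnt A u (dotp u x + j))"
      unfolding Tu_def by (intro sum.cong refl) (rule fib)
    also have "\<dots> = (\<Sum>i\<in>UNIV. acnt A u i * (\<Sum>j\<in>UNIV. acnt A u j * acnt A u (i + j)))"
      by (rule fib)
    also have "\<dots> = (\<Sum>i\<in>UNIV. \<Sum>j\<in>UNIV. acnt A u i * acnt A u j * acnt A u (i + j))"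
      by (simp add: sum_distrib_left mult.assoc)
    finally show ?thesis .
  qed
  have Bform: "Bu u = (\<Sum>j\<in>UNIV. acnt A u j * acnt A u (j + j))" for u
    unfolding Bu_def by (rule fib)
  have Pform: "Pu u = (\<Sum>j\<in>UNIV. acnt A u j * acnt A u j)" for u
    unfolding Pu_def by (rule fib)
  have acnt0: "acnt A 0 0 = m" by (simp add: acnt_def m_def)
  have T0: "Tu 0 = m^3" by (simp add: Tu_def acnt0 power3_eq_cube m_def)
  have B0: "Bu 0 = m^2" by (simp add: Bu_def acnt0 power2_eq_square m_def)
  have P0: "Pu 0 = m^2" by (simp add: Pu_def acnt0 power2_eq_square m_def)
  have Stot: "(\<Sum>u\<in>UNIV. Psi u) = (\<Sum>u\<in>UNIV. Tu u) - 5*N*(m^3/5) + 1/5*m*((\<Sum>u\<in>UNIV. Bu u) - 5*N*(m^2/5))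
        + 27/35*N*((\<Sum>u\<in>UNIV. Pu u) - 5*N*(m^2/5))"
  proof -
    have "(\<Sum>u\<in>UNIV. Psi u) = (\<Sum>u\<in>UNIV. Tu u) - (\<Sum>u\<in>(UNIV::(5^'n) set). m^3/5)
        + (\<Sum>u\<in>UNIV. 1/5*m*(Bu u - m^2/5)) + (\<Sum>u\<in>UNIV. 27/35*N*(Pu u - m^2/5))"
      unfolding Psi_def by (simp add: sum.distrib sum_subtractf)
    also have "(\<Sum>u\<in>UNIV. 1/5*m*(Bu u - m^2/5)) = 1/5*m*((\<Sum>u\<in>UNIV. Bu u) - 5*N*(m^2/5))"
    proof -
      have "(\<Sum>u\<in>UNIV. 1/5*m*(Bu u - m^2/5)) = 1/5*m*(\<Sum>u\<in>UNIV. Bu u - m^2/5)"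
        by (rule sum_distrib_left[symmetric])
      also have "(\<Sum>u\<in>UNIV. Bu u - m^2/5) = (\<Sum>u\<in>UNIV. Bu u) - 5*N*(m^2/5)"
        by (simp add: sum_subtractf cU cU2)
      finally show ?thesis .
    qed
    also have "(\<Sum>u\<in>UNIV. 27/35*N*(Pu u - m^2/5)) = 27/35*N*((\<Sum>u\<in>UNIV. Pu u) - 5*N*(m^2/5))"
    proof -
      have "(\<Sum>u\<in>UNIV. 27/35*N*(Pu u - m^2/5)) = 27/35*N*(\<Sum>u\<in>UNIV. Pu u - m^2/5)"
        by (rule sum_distrib_left[symmetric])
      also have "(\<Sum>u\<in>UNIV. Pu u - m^2/5) = (\<Sum>u\<in>UNIV. Pu u) - 5*N*(m^2/5)"
        by (simp add: sum_subtractf cU cU2)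
      finally show ?thesis .
    qed
    also have "(\<Sum>u\<in>(UNIV::(5^'n) set). m^3/5) = 5*N*(m^3/5)" by (simp add: cU cU2)
    finally show ?thesis .
  qed
  have Srest: "(\<Sum>u\<in>UNIV - {0}. Psi u) = -(12/175) * m * ((2*m - 3*N) * (7*m + 15*N))"
  proof -
    have "(\<Sum>u\<in>UNIV. Psi u) = Psi 0 + (\<Sum>u\<in>UNIV - {0}. Psi u)"
      by (rule sum.remove) auto
    moreover have "Psi 0 = m^3 - m^3/5 + 1/5*m*(m^2 - m^2/5) + 27/35*N*(m^2 - m^2/5)"
      by (simp add: Psi_def T0 B0 P0)
    ultimately show ?thesis using Stot ST SB SP
      by (simp add: field_simps power2_eq_square power3_eq_cube)
  qed
  have neg: "(\<Sum>u\<in>UNIV - {0}. Psi u) < 0"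
  proof -
    have "0 < m * ((2*m - 3*N) * (7*m + 15*N))" using mpos big Npos by simp
    then show ?thesis unfolding Srest by simp
  qed
  obtain u where u0: "u \<noteq> 0" and uneg: "Psi u < 0"
  proof -
    have "\<exists>u\<in>UNIV - {0}. Psi u < 0"
    proof (rule ccontr)
      assume "\<not> (\<exists>u\<in>UNIV - {0}. Psi u < 0)"
      then have "0 \<le> (\<Sum>u\<in>UNIV - {0}. Psi u)" by (intro sum_nonneg) (force simp: not_less)
      then show False using neg by simp
    qed
    then show ?thesis using that by blast
  qed
  define a where "a = acnt A u"
  have a_nonneg: "0 \<le> a j" for j by (simp add: a_def acnt_def)
  have a_le: "a j \<le> N" for j
  proof -
    have "card {x \<in> A. dotp u x = j} \<le> card {v::5^'n. dotp u v = j}" by (rule card_mono) auto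
    then show ?thesis using card_level'[OF u0, of j] by (simp add: a_def acnt_def N_def)
  qed
  have PH: "a (i + j) + a i \<le> N" if "0 < a i" "0 < a j" for i j
  proof -
    have "{x \<in> A. dotp u x = j} \<noteq> {}"
    proof
      assume "{x \<in> A. dotp u x = j} = {}"
      then have "a j = 0" by (simp add: a_def acnt_def)
      then show False using that(2) by simp
    qed
    then obtain b where b: "b \<in> A" "dotp u b = j" by auto
    define S1 where "S1 = (\<lambda>x. x + b) ` {x \<in> A. dotp u x = i}"
    define S2 where "S2 = {x \<in> A. dotp u x = i + j}"
    have c1: "card S1 = card {x \<in> A. dotp u x = i}"
      unfolding S1_def by (rule card_image) (auto simp: inj_on_def)
    have disj: "S1 \<inter> S2 = {}" using sf b by (auto simp: S1_def S2_def)
    have sub: "S1 \<union> S2 \<subseteq> {v. dotp u v = i + j}"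
      using b by (auto simp: S1_def S2_def dotp_add_right)
    have "card (S1 \<union> S2) \<le> card {v::5^'n. dotp u v = i + j}" by (rule card_mono[OF _ sub]) simp
    moreover have "card (S1 \<union> S2) = card S1 + card S2" by (rule card_Un_disjoint) (simp_all add: disj)
    ultimately have "card {x \<in> A. dotp u x = i} + card {x \<in> A. dotp u x = i + j} \<le> 5 ^ (CARD('n) - 1)"
      using c1 card_level'[OF u0, of "i + j"] by (simp add: S2_def)
    then have "real (card {x \<in> A. dotp u x = i} + card {x \<in> A. dotp u x = i + j}) \<le> real ((5::nat) ^ (CARD('n) - 1))"
      by (simp only: of_nat_le_iff)
    then have "real (card {x \<in> A. dotp u x = i}) + real (card {x \<in> A. dotp u x = i + j}) \<le> N"
      by (simp add: N_def)
    then show ?thesis by (simp add: a_def acnt_def)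
  qed
  have msum': "(\<Sum>j\<in>UNIV. a j) = m" using msum by (simp add: a_def)
  have Psi_u: "Psi u = (\<Sum>i\<in>UNIV. \<Sum>j\<in>UNIV. a i * a j * a (i + j)) - (\<Sum>j\<in>UNIV. a j)^3/5
     + 1/5 * (\<Sum>j\<in>UNIV. a j) * ((\<Sum>j\<in>UNIV. a j * a (j + j)) - (\<Sum>j\<in>UNIV. a j)^2/5)
     + 27/35 * N * ((\<Sum>j\<in>UNIV. a j * a j) - (\<Sum>j\<in>UNIV. a j)^2/5)"
    unfolding msum' by (simp add: Psi_def Tform Bform Pform a_def)
  have empty_of: "{x \<in> A. dotp u x = j} = {}" if "a j = 0" for j
    using that by (simp add: a_def acnt_def)
  have ex_e: "\<exists>e. dotp u e = 1"
  proof -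
    have "card {v::5^'n. dotp u v = 1} \<noteq> 0" using card_level'[OF u0, of 1] by simp
    then have "{v::5^'n. dotp u v = 1} \<noteq> {}" by (intro notI) simp
    then show ?thesis by blast
  qed
  then obtain e1 where e1: "dotp u e1 = 1" by blast
  define H where "H = {v::5^'n. dotp u v = 0}"
  have subH: "add_subgroup H"
    unfolding add_subgroup_def H_def by (simp add: dotp_add_right dotp_uminus_right)
  have dot_all: "dotp u x = 0 \<or> dotp u x = 1 \<or> dotp u x = 2 \<or> dotp u x = 3 \<or> dotp u x = 4" for x
  proof -
    have "dotp u x \<in> (UNIV::5 set)" by (rule UNIV_I)
    then have "dotp u x \<in> {0,1,2,3,4}" by (simp only: UNIV_5)
    then show ?thesis by simp
  qed
  show ?thesis
  proof (cases "a 0 = 0 \<and> a 2 = 0 \<and> a 3 = 0")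
    case True
    have inA: "dotp u x = 1 \<or> dotp u x = 4" if "x \<in> A" for x
    proof -
      have "dotp u x \<noteq> 0" using that empty_of[of 0] True by blast
      moreover have "dotp u x \<noteq> 2" using that empty_of[of 2] True by blast
      moreover have "dotp u x \<noteq> 3" using that empty_of[of 3] True by blast
      ultimately show ?thesis using dot_all[of x] by blast
    qed
    have "e1 \<notin> H" using e1 by (simp add: H_def)
    moreover have "A \<subseteq> (\<lambda>h. e1 + h) ` H \<union> (\<lambda>h. - e1 + h) ` H"
    proof
      fix x assume x: "x \<in> A"
      show "x \<in> (\<lambda>h. e1 + h) ` H \<union> (\<lambda>h. - e1 + h) ` H"
      proof (cases "dotp u x = 1")
        case True
        have "x - e1 \<in> H" using True e1 by (simp add: H_def dotp_diff_right)
        moreover have "x = e1 + (x - e1)" by simp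
        ultimately show ?thesis by blast
      next
        case False
        then have "dotp u x = 4" using inA[OF x] by simp
        then have "x + e1 \<in> H" using e1 by (simp add: H_def dotp_add_right)
        moreover have "x = - e1 + (x + e1)" by simp
        ultimately show ?thesis by blast
      qed
    qed
    ultimately show ?thesis using subH by blast
  next
    case nS1: False
    show ?thesis
    proof (cases "a 0 = 0 \<and> a 1 = 0 \<and> a 4 = 0")
      case True
      define e2 where "e2 = e1 + e1"
      have "dotp u e2 = dotp u e1 + dotp u e1" by (simp only: e2_def dotp_add_right)
      then have e2: "dotp u e2 = 2" using e1 by simp
      have inA: "dotp u x = 2 \<or> dotp u x = 3" if "x \<in> A" for x
      proof -
        have "dotp u x \<noteq> 0" using that empty_of[of 0] True by blast
        moreover have "dotp u x \<noteq> 1" using that empty_of[of 1] True by blast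
        moreover have "dotp u x \<noteq> 4" using that empty_of[of 4] True by blast
        ultimately show ?thesis using dot_all[of x] by blast
      qed
      have "e2 \<notin> H" using e2 by (simp add: H_def)
      moreover have "A \<subseteq> (\<lambda>h. e2 + h) ` H \<union> (\<lambda>h. - e2 + h) ` H"
      proof
        fix x assume x: "x \<in> A"
        show "x \<in> (\<lambda>h. e2 + h) ` H \<union> (\<lambda>h. - e2 + h) ` H"
        proof (cases "dotp u x = 2")
          case True
          have "x - e2 \<in> H" using True e2 by (simp add: H_def dotp_diff_right)
          moreover have "x = e2 + (x - e2)" by simp
          ultimately show ?thesis by blast
        next
          case False
          then have "dotp u x = 3" using inA[OF x] by simp
          then have "x + e2 \<in> H" using e2 by (simp add: H_def dotp_add_right)
          moreover have "x = - e2 + (x + e2)" by simp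
          ultimately show ?thesis by blast
        qed
      qed
      ultimately show ?thesis using subH by blast
    next
      case nS2: False
      have pos_or: "a j = 0 \<or> 0 < a j" for j using a_nonneg[of j] by auto
      have c0: "2 * a 0 \<le> N"
      proof (cases "a 0 = 0")
        case True then show ?thesis using Npos by simp
      next
        case False
        then have "0 < a 0" using pos_or by blast
        then show ?thesis using PH[of 0 0] by simp
      qed
      have half: "2 * a j \<le> N" if "0 < a 0" for j
      proof (cases "a j = 0")
        case True then show ?thesis using Npos by simp
      next
        case False
        then have "0 < a j" using pos_or by blast
        then show ?thesis using PH[of j 0] that by simp
      qed
      have c14: "a 1 + a 4 \<le> N"
      proof (cases "a 0 = 0")
        case False
        then have "0 < a 0" using pos_or by blast
        then show ?thesis using half[of 1] half[of 4] by linarith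
      next
        case a0: True
        show ?thesis
        proof (cases "a 1 = 0 \<or> a 4 = 0")
          case True then show ?thesis using a_le[of 1] a_le[of 4] a_nonneg[of 1] a_nonneg[of 4] by auto
        next
          case False
          then have p1: "0 < a 1" and p4: "0 < a 4" using pos_or by blast+
          have "a 2 \<noteq> 0 \<or> a 3 \<noteq> 0" using nS1 a0 by blast
          then show ?thesis
          proof
            assume "a 2 \<noteq> 0"
            then have "0 < a 2" using pos_or by blast
            then have "a (4 + 2) + a 4 \<le> N" using PH[of 4 2] p4 by blast
            moreover have h: "(4::5) + 2 = 1" by simp
            ultimately show ?thesis by (simp only: h add.commute)
          next
            assume "a 3 \<noteq> 0"
            then have "0 < a 3" using pos_or by blast
            then have "a (1 + 3) + a 1 \<le> N" using PH[of 1 3] p1 by blast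
            then show ?thesis by simp
          qed
        qed
      qed
      have c23: "a 2 + a 3 \<le> N"
      proof (cases "a 0 = 0")
        case False
        then have "0 < a 0" using pos_or by blast
        then show ?thesis using half[of 2] half[of 3] by linarith
      next
        case a0: True
        show ?thesis
        proof (cases "a 2 = 0 \<or> a 3 = 0")
          case True then show ?thesis using a_le[of 2] a_le[of 3] a_nonneg[of 2] a_nonneg[of 3] by auto
        next
          case False
          then have p2: "0 < a 2" and p3: "0 < a 3" using pos_or by blast+
          have "a 1 \<noteq> 0 \<or> a 4 \<noteq> 0" using nS2 a0 by blast
          then show ?thesis
          proof
            assume "a 1 \<noteq> 0"
            then have "0 < a 1" using pos_or by blast
            then have "a (2 + 1) + a 2 \<le> N" using PH[of 2 1] p2 by blast
            then show ?thesis by simp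
          next
            assume "a 4 \<noteq> 0"
            then have "0 < a 4" using pos_or by blast
            then have "a (3 + 4) + a 3 \<le> N" using PH[of 3 4] p3 by blast
            moreover have h: "(3::5) + 4 = 2" by simp
            ultimately show ?thesis by (simp only: h)
          qed
        qed
      qed
      have "0 \<le> Psi u"
        unfolding Psi_u
        by (rule KIsum[OF a_nonneg Npos c0 c14 c23]) (simp add: msum' big)
      then show ?thesis using uneg by simp
    qed
  qed
qed


end
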